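(* Let $X$ be a finite set and $(\mathcal{T}_X,\leq)$ the ordered full transformation semigroup with the natural partial order. For $f,g\in\mathcal{T}_X$ let $B(f)=(f\cup f\mathcal{T}_Xf]$ and $B(g)=(g\cup g\mathcal{T}_Xg]$ be the principal bi-ideals they generate. Then $f\,\mathscr{L}_{\mathcal{T}_X}\,g$ if and only if $B(f)\,\mathscr{L}_{\mathcal{B}(\mathcal{T}_X)}\,B(g)$, where for bi-ideals $B_1,B_2$ of $(\mathcal{T}_X,\leq)$ we define $B_1\,\mathscr{L}_{\mathcal{B}(\mathcal{T}_X)}\,B_2$ to mean: for each $b_1\in B_1$ there exists $b_2\in B_2$ with $b_1\,\mathscr{L}_{\mathcal{T}_X}\,b_2$, and for each $b_2'\in B_2$ there exists $b_1'\in B_1$ with $b_1'\,\mathscr{L}_{\mathcal{T}_X}\,b_2'$.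
   Context: $\mathcal{T}_X$ is the semigroup of all maps $X\to X$, maps written on the right and composed left to right. Natural partial order: $f\leq g$ iff $f\mathcal{T}_X^1\subseteq g\mathcal{T}_X^1$ and $f=\alpha f=\alpha g$ for some $\alpha\in\mathcal{T}_X$; $(\mathcal{T}_X,\leq)$ is then a regular ordered semigroup. For $A\subseteq\mathcal{T}_X$, $(A]=\{h: h\leq a\text{ for some }a\in A\}$. A bi-ideal is a nonempty $A$ with $A\mathcal{T}_XA\subseteq A$ and $(A]=A$. $\mathscr{L}_{\mathcal{T}_X}$ is the Green's $\mathscr{L}$-relation of the ordered semigroup $(\mathcal{T}_X,\leq)$: $f\,\mathscr{L}_{\mathcal{T}_X}\,g$ iff $(f\cup\mathcal{T}_Xf]=(g\cup\mathcal{T}_Xg]$ (equivalently, $\operatorname{Im}f=\operatorname{Im}g$). *)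

theory Defs
  imports Main
begin

text \<open>Maps are written on the right and composed left to right, so the product
  f g means "first f, then g", i.e. the HOL function g \<circ> f.\<close>

definition tmul :: "('a \<Rightarrow> 'a) \<Rightarrow> ('a \<Rightarrow> 'a) \<Rightarrow> ('a \<Rightarrow> 'a)" where
  "tmul f g = g \<circ> f"

definition rideal1 :: "('a \<Rightarrow> 'a) \<Rightarrow> ('a \<Rightarrow> 'a) set" where
  "rideal1 f = {f} \<union> {tmul f h | h. True}"

definition nat_le :: "('a \<Rightarrow> 'a) \<Rightarrow> ('a \<Rightarrow> 'a) \<Rightarrow> bool" where
  "nat_le f g \<longleftrightarrow> rideal1 f \<subseteq> rideal1 g \<and> (\<exists>\<alpha>. f = tmul \<alpha> f \<and> f = tmul \<alpha> g)"

definition down :: "('a \<Rightarrow> 'a) set \<Rightarrow> ('a \<Rightarrow> 'a) set" where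
  "down A = {h. \<exists>a\<in>A. nat_le h a}"

definition Bideal :: "('a \<Rightarrow> 'a) \<Rightarrow> ('a \<Rightarrow> 'a) set" where
  "Bideal f = down ({f} \<union> {tmul (tmul f h) f | h. True})"

definition L_rel :: "('a \<Rightarrow> 'a) \<Rightarrow> ('a \<Rightarrow> 'a) \<Rightarrow> bool" where
  "L_rel f g \<longleftrightarrow> down ({f} \<union> {tmul h f | h. True}) = down ({g} \<union> {tmul h g | h. True})"

definition L_bi :: "('a \<Rightarrow> 'a) set \<Rightarrow> ('a \<Rightarrow> 'a) set \<Rightarrow> bool" where
  "L_bi B1 B2 \<longleftrightarrow> (\<forall>b1\<in>B1. \<exists>b2\<in>B2. L_rel b1 b2) \<and> (\<forall>b2\<in>B2. \<exists>b1\<in>B1. L_rel b1 b2)"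

end

theory Submission
  imports Defs
begin

lemma nat_le_refl: "nat_le f f"
  unfolding nat_le_def tmul_def by (rule conjI, simp, rule exI[of _ id], simp)

lemma nat_le_range: "nat_le h a \<Longrightarrow> range h \<subseteq> range a"
  unfolding nat_le_def tmul_def by (metis fun.set_map image_subset_iff rangeI)

lemma D_eq: fixes f :: "'a \<Rightarrow> 'a" shows "down ({f} \<union> {tmul h f | h. True}) = {k. range k \<subseteq> range f}"
proof
  show "down ({f} \<union> {tmul h f | h. True}) \<subseteq> {k. range k \<subseteq> range f}"
  proof
    fix k :: "'a \<Rightarrow> 'a" assume "k \<in> down ({f} \<union> {tmul h f | h. True})"
    then obtain a where a: "a \<in> {f} \<union> {tmul h f | h. True}" "nat_le k a"
      unfolding down_def by blast
    have "range a \<subseteq> range f" using a(1) unfolding tmul_def by auto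
    with nat_le_range[OF a(2)] show "k \<in> {k. range k \<subseteq> range f}" by auto
  qed
next
  show "{k. range k \<subseteq> range f} \<subseteq> down ({f} \<union> {tmul h f | h. True})"
  proof
    fix k :: "'a \<Rightarrow> 'a" assume "k \<in> {k. range k \<subseteq> range f}"
    then have "\<forall>x. \<exists>y. k x = f y" by auto
    then obtain h where "\<forall>x. k x = f (h x)" by metis
    then have "k = tmul h f" unfolding tmul_def by auto
    then show "k \<in> down ({f} \<union> {tmul h f | h. True})"
      unfolding down_def using nat_le_refl by blast
  qed
qed

lemma L_rel_iff: fixes f g :: "'a \<Rightarrow> 'a" shows "L_rel f g \<longleftrightarrow> range f = range g"
proof
  assume "L_rel f g"
  then have "{k::'a\<Rightarrow>'a. range k \<subseteq> range f} = {k::'a\<Rightarrow>'a. range k \<subseteq> range g}"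
    unfolding L_rel_def D_eq by simp
  then show "range f = range g" by blast
next
  assume "range f = range g" then show "L_rel f g" unfolding L_rel_def D_eq by simp
qed

lemma Bideal_range: "b \<in> Bideal f \<Longrightarrow> range b \<subseteq> range f"
proof -
  assume "b \<in> Bideal f"
  then obtain a where a: "a \<in> {f} \<union> {tmul (tmul f h) f | h. True}" "nat_le b a"
    unfolding Bideal_def down_def by blast
  have "range a \<subseteq> range f" using a(1) unfolding tmul_def by auto
  with nat_le_range[OF a(2)] show ?thesis by auto
qed

lemma Bideal_self: "f \<in> Bideal f"
  unfolding Bideal_def down_def using nat_le_refl by blast

lemma Bideal_exists:
  assumes T: "T \<subseteq> range g" "T \<noteq> {}"
  shows "\<exists>k\<in>Bideal g. range k = T"
proof -
  obtain t0 where t0: "t0 \<in> T" using T by blast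
  define h0 where "h0 = (\<lambda>r. if r \<in> T then r else t0)"
  have "\<forall>r. \<exists>y. h0 r = g y" using T t0 unfolding h0_def by auto
  then obtain h where h: "\<forall>r. h0 r = g (h r)" by metis
  define k where "k = tmul (tmul g h) g"
  have kx: "k x = h0 (g x)" for x using h unfolding k_def tmul_def by simp
  have "range k = T"
  proof
    show "range k \<subseteq> T" using t0 unfolding kx h0_def by auto
    show "T \<subseteq> range k"
    proof
      fix t assume "t \<in> T"
      then obtain x where "t = g x" using T by auto
      then have "k x = t" using kx \<open>t \<in> T\<close> unfolding h0_def by simp
      then show "t \<in> range k" by (metis rangeI)
    qed
  qed
  moreover have "k \<in> Bideal g"
    unfolding Bideal_def down_def k_def using nat_le_refl by blast
  ultimately show ?thesis by blast
qed

theorem mainTheorem10: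
  fixes f g :: "'a::finite \<Rightarrow> 'a"
  shows "L_rel f g \<longleftrightarrow> L_bi (Bideal f) (Bideal g)"
proof
  assume "L_rel f g"
  then have eq: "range f = range g" by (simp add: L_rel_iff)
  show "L_bi (Bideal f) (Bideal g)"
    unfolding L_bi_def L_rel_iff
  proof (intro conjI ballI)
    fix b1 assume "b1 \<in> Bideal f"
    then have "range b1 \<subseteq> range g" "range b1 \<noteq> {}" using Bideal_range[of b1 f] eq by auto
    then show "\<exists>b2\<in>Bideal g. range b1 = range b2" using Bideal_exists by metis
  next
    fix b2 assume "b2 \<in> Bideal g"
    then have "range b2 \<subseteq> range f" "range b2 \<noteq> {}" using Bideal_range[of b2 g] eq by auto
    then show "\<exists>b1\<in>Bideal f. range b1 = range b2" using Bideal_exists by metis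
  qed
next
  assume "L_bi (Bideal f) (Bideal g)"
  then have 1: "\<exists>b2\<in>Bideal g. range f = range b2" and 2: "\<exists>b1\<in>Bideal f. range b1 = range g"
    unfolding L_bi_def L_rel_iff using Bideal_self by blast+
  from 1 have "range f \<subseteq> range g" using Bideal_range by blast
  moreover from 2 have "range g \<subseteq> range f" using Bideal_range by blast
  ultimately show "L_rel f g" by (simp add: L_rel_iff)
qed

end
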